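(* Let $B$ be a monoid, let $r\ge1$, let $A=B\langle x_0,\dots,x_r\rangle$ and $X=\operatorname{MProj}(A)$. Then for every integer $n$, $\Gamma_*(\mathcal{O}_X(n))=A(n)$ as graded $A$-modules, where $\Gamma_*(\mathcal{F})=\bigoplus_{m\in\mathbb{Z}}\Gamma(X,\mathcal{F}(m))$.
   Context: A monoid is a commutative associative monoid with identity $1$ and absorbing element $0$; modules over it are pointed sets with a compatible action, and $\bigoplus$ denotes wedge sum. $B\langle x_0,\dots,x_r\rangle$ is the graded monoid with $A_0=B$ and $A_n=\{b\,x_0^{i_0}\cdots x_r^{i_r}: b\in B,\ i_j\ge0,\ \sum i_j=n\}$ (so $A_n$ consists only of $0$ for $n<0$), with the obvious multiplication. $X=\operatorname{MProj}(A)$ is the set of prime ideals not containing $A_{\ge1}$, covered by $D_+(x_i)\cong\operatorname{MSpec}(A_{(x_i)})$, where $A_{(f)}$ is the degree-$0$ part of the localization $A_f$. $A(n)$ is the graded module with $A(n)_i=A_{i+n}$, $\mathcal{O}_X(n)=\widetilde{A(n)}$ (sections on $D_+(f)$ are the degree-$n$ elements of $A_f$), and $\mathcal{F}(m)=\mathcal{F}\otimes_{\mathcal{O}_X}\mathcal{O}_X(m)$. $\Gamma_*(\mathcal{F})$ is the graded $A$-module with $\Gamma(X,\mathcal{F}(m))$ in degree $m$, where $a\in A_i$ acts via $a\in\Gamma(X,\mathcal O_X(i))$ and $\mathcal F(m)\otimes\mathcal O_X(i)\cong\mathcal F(m+i)$. *)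

theory Defs
  imports Main
begin

text \<open>
  Monoid B: commutative monoid with absorbing zero, i.e. type class comm_monoid_mult + mult_zero.
  Elements of A = B<x_0..x_r> are represented as pairs (b, alpha) with alpha an exponent vector
  supported on {0..r}; all pairs with b = 0 are normalised to the single zero element (0, 0).
\<close>

type_synonym 'b melem = "'b \<times> (nat \<Rightarrow> nat)"

definition Acar :: "nat \<Rightarrow> ('b::{comm_monoid_mult,mult_zero}) melem set" where
  "Acar r = {(b, \<alpha>). (\<forall>i>r. \<alpha> i = 0) \<and> (b = 0 \<longrightarrow> \<alpha> = (\<lambda>_. 0))}"

definition azero :: "('b::{comm_monoid_mult,mult_zero}) melem" where
  "azero = (0, \<lambda>_. 0)"

definition aone :: "('b::{comm_monoid_mult,mult_zero}) melem" where
  "aone = (1, \<lambda>_. 0)"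

definition amul :: "('b::{comm_monoid_mult,mult_zero}) melem \<Rightarrow> 'b melem \<Rightarrow> 'b melem" where
  "amul x y = (if fst x * fst y = 0 then azero
               else (fst x * fst y, \<lambda>i. snd x i + snd y i))"

text \<open>a lies in the homogeneous part A_d (d an integer); 0 lies in every A_d,
  so A_d = {0} for d < 0.\<close>
definition hdeg :: "nat \<Rightarrow> int \<Rightarrow> ('b::{comm_monoid_mult,mult_zero}) melem \<Rightarrow> bool" where
  "hdeg r d a \<longleftrightarrow> a \<in> Acar r \<and> (fst a = 0 \<or> int (sum (snd a) {0..r}) = d)"

definition Apos :: "nat \<Rightarrow> ('b::{comm_monoid_mult,mult_zero}) melem set" where
  "Apos r = {a. \<exists>d::int. d \<ge> 1 \<and> hdeg r d a}"

definition is_ideal :: "nat \<Rightarrow> ('b::{comm_monoid_mult,mult_zero}) melem set \<Rightarrow> bool" where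
  "is_ideal r P \<longleftrightarrow> P \<subseteq> Acar r \<and> azero \<in> P \<and> (\<forall>a\<in>Acar r. \<forall>p\<in>P. amul a p \<in> P)"

definition is_prime :: "nat \<Rightarrow> ('b::{comm_monoid_mult,mult_zero}) melem set \<Rightarrow> bool" where
  "is_prime r P \<longleftrightarrow> is_ideal r P \<and> aone \<notin> P \<and>
     (\<forall>a\<in>Acar r. \<forall>b\<in>Acar r. amul a b \<in> P \<longrightarrow> a \<in> P \<or> b \<in> P)"

text \<open>MProj(A): primes not containing A_{\<ge>1} (every ideal of A is homogeneous).\<close>
definition MProj :: "nat \<Rightarrow> ('b::{comm_monoid_mult,mult_zero}) melem set set" where
  "MProj r = {P. is_prime r P \<and> \<not> Apos r \<subseteq> P}"

definition is_open :: "nat \<Rightarrow> ('b::{comm_monoid_mult,mult_zero}) melem set set \<Rightarrow> bool" where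
  "is_open r U \<longleftrightarrow> (\<exists>S \<subseteq> Acar r. U = {P \<in> MProj r. \<not> S \<subseteq> P})"

text \<open>Element of the stalk (A(n))_(P): the class of the fraction a/f, where f \<notin> P is
  homogeneous of degree d and a has degree d + n.\<close>
definition frac_class :: "nat \<Rightarrow> int \<Rightarrow> ('b::{comm_monoid_mult,mult_zero}) melem set
     \<Rightarrow> 'b melem \<Rightarrow> 'b melem \<Rightarrow> ('b melem \<times> 'b melem) set" where
  "frac_class r n P a f = {(a', f'). f' \<in> Acar r \<and> f' \<notin> P \<and>
      (\<exists>d::nat. hdeg r (int d) f' \<and> hdeg r (int d + n) a') \<and>
      (\<exists>u\<in>Acar r. u \<notin> P \<and> amul u (amul a f') = amul u (amul a' f))}"

text \<open>Sections of O_X(n) = ~A(n) over an open U (Hartshorne-style definition of ~M):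
  functions assigning to each P in U an element of the stalk, locally given by one fraction.\<close>
definition sections :: "nat \<Rightarrow> int \<Rightarrow> ('b::{comm_monoid_mult,mult_zero}) melem set set
     \<Rightarrow> ('b melem set \<Rightarrow> ('b melem \<times> 'b melem) set) set" where
  "sections r n U = {s. (\<forall>P. P \<notin> U \<longrightarrow> s P = {}) \<and>
     (\<forall>P\<in>U. \<exists>V a f d. is_open r V \<and> P \<in> V \<and> V \<subseteq> U \<and>
        hdeg r (int d) f \<and> hdeg r (int d + n) a \<and>
        (\<forall>Q\<in>V. f \<notin> Q \<and> s Q = frac_class r n Q a f))}"

definition Gamma :: "nat \<Rightarrow> int
     \<Rightarrow> (('b::{comm_monoid_mult,mult_zero}) melem set \<Rightarrow> ('b melem \<times> 'b melem) set) set" where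
  "Gamma r n = sections r n (MProj r)"

definition gmap :: "nat \<Rightarrow> int \<Rightarrow> ('b::{comm_monoid_mult,mult_zero}) melem
     \<Rightarrow> ('b melem set \<Rightarrow> ('b melem \<times> 'b melem) set)" where
  "gmap r n a = (\<lambda>P. if P \<in> MProj r then frac_class r n P a aone else {})"

text \<open>Action of a \<in> A_i: Gamma(X,O_X(k)) \<rightarrow> Gamma(X,O_X(k+i)), s \<mapsto> a s; n is the target degree.\<close>
definition sact :: "nat \<Rightarrow> int \<Rightarrow> ('b::{comm_monoid_mult,mult_zero}) melem
     \<Rightarrow> ('b melem set \<Rightarrow> ('b melem \<times> 'b melem) set)
     \<Rightarrow> ('b melem set \<Rightarrow> ('b melem \<times> 'b melem) set)" where
  "sact r n a s = (\<lambda>P. if P \<in> MProj r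
       then \<Union>{frac_class r n P (amul a x) t | x t. (x, t) \<in> s P} else {})"

end

theory Submission
  imports Defs
begin

lemma amul_comm: "amul x y = amul y x"
  unfolding amul_def by (auto simp: mult.commute add.commute)

lemma amul_assoc: "amul (amul x y) z = amul x (amul y z)"
proof -
  have h: "\<And>a b c::'a::{comm_monoid_mult,mult_zero}. a * b = 0 \<Longrightarrow> a * (b * c) = 0"
    by (metis mult.assoc mult_zero_left)
  have h2: "\<And>a b c::'a::{comm_monoid_mult,mult_zero}. b * c = 0 \<Longrightarrow> (a * b) * c = 0"
    by (metis mult.assoc mult_zero_right)
  show ?thesis unfolding amul_def azero_def using h h2 by (auto simp: add.assoc mult.assoc)
qed

lemma amul_lcomm: "amul x (amul y z) = amul y (amul x z)"
  by (metis amul_assoc amul_comm)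

lemmas amul_ac = amul_assoc amul_comm amul_lcomm

lemma Acar_zero: "x \<in> Acar r \<Longrightarrow> fst x = 0 \<Longrightarrow> x = azero"
  unfolding Acar_def azero_def by (cases x) auto

lemma azero_Acar: "azero \<in> Acar r" unfolding Acar_def azero_def by auto
lemma aone_Acar: "aone \<in> Acar r" unfolding Acar_def aone_def by auto

lemma amul_one: "x \<in> Acar r \<Longrightarrow> amul aone x = x"
  unfolding amul_def aone_def using Acar_zero[of x r] by (cases x) (auto simp: azero_def)
lemma amul_one2: "x \<in> Acar r \<Longrightarrow> amul x aone = x"
  using amul_one amul_comm by metis

lemma amul_Acar: "x \<in> Acar r \<Longrightarrow> y \<in> Acar r \<Longrightarrow> amul x y \<in> Acar r"
  unfolding amul_def Acar_def azero_def by (cases x; cases y) auto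

lemma amul_zero: "amul azero x = azero"
  unfolding amul_def azero_def by auto

definition unitB :: "'b::{comm_monoid_mult,mult_zero} \<Rightarrow> bool" where
  "unitB c \<longleftrightarrow> (\<exists>c'. c * c' = 1)"

lemma unit_nz: "(0::'b::{comm_monoid_mult,mult_zero}) \<noteq> 1 \<Longrightarrow> unitB (c::'b) \<Longrightarrow> c \<noteq> 0"
  unfolding unitB_def by auto

lemma unit_mult_nz: "unitB (c::'b::{comm_monoid_mult,mult_zero}) \<Longrightarrow> b \<noteq> 0 \<Longrightarrow> b * c \<noteq> 0"
  unfolding unitB_def by (metis mult.assoc mult.right_neutral mult_zero_left)

lemma unit_cancel: "unitB (c::'b::{comm_monoid_mult,mult_zero}) \<Longrightarrow> c * x = c * y \<Longrightarrow> x = y"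
  unfolding unitB_def by (metis mult.assoc mult.commute mult.left_neutral)

lemma cancel:
  assumes "unitB (fst u)" "x \<in> Acar r" "y \<in> Acar r" "amul u x = amul u y"
  shows "x = y"
proof (cases "fst x = 0")
  case True
  hence "amul u x = azero" unfolding amul_def by auto
  hence "fst u * fst y = 0" using assms(4) unfolding amul_def azero_def
    by (auto split: if_splits)
  hence "fst y = 0" using unit_mult_nz[OF assms(1)] by (metis mult.commute)
  thus ?thesis using True Acar_zero assms(2,3) by metis
next
  case False
  hence nz: "fst u * fst x \<noteq> 0" using unit_mult_nz[OF assms(1)] by (metis mult.commute)
  hence nzy: "fst u * fst y \<noteq> 0" using assms(4) unfolding amul_def azero_def
    by (auto split: if_splits)
  have "fst u * fst x = fst u * fst y \<and> (\<lambda>i. snd u i + snd x i) = (\<lambda>i. snd u i + snd y i)"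
    using assms(4) nz nzy unfolding amul_def by auto
  hence "fst x = fst y" "snd x = snd y"
    using unit_cancel[OF assms(1)] by (auto dest: fun_cong simp: fun_eq_iff)
  thus ?thesis by (simp add: prod_eq_iff)
qed

lemma prime_mul_notin:
  "is_prime r P \<Longrightarrow> a \<in> Acar r \<Longrightarrow> b \<in> Acar r \<Longrightarrow> a \<notin> P \<Longrightarrow> b \<notin> P \<Longrightarrow> amul a b \<notin> P"
  unfolding is_prime_def by blast

lemma prime_ideal: "is_prime r P \<Longrightarrow> a \<in> Acar r \<Longrightarrow> p \<in> P \<Longrightarrow> amul a p \<in> P"
  unfolding is_prime_def is_ideal_def by blast

lemma prime_sub: "is_prime r P \<Longrightarrow> P \<subseteq> Acar r"
  unfolding is_prime_def is_ideal_def by blast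

lemma class_sub:
  assumes P: "is_prime r P" and A: "a \<in> Acar r" "f \<in> Acar r" "a2 \<in> Acar r" "f2 \<in> Acar r"
    and nf: "f \<notin> P" and u: "u \<in> Acar r" "u \<notin> P"
    and eq: "amul u (amul a f2) = amul u (amul a2 f)"
  shows "frac_class r n P a f \<subseteq> frac_class r n P a2 f2"
proof
  fix z assume "z \<in> frac_class r n P a f"
  obtain a' f' where z: "z = (a', f')" by (cases z)
  with \<open>z \<in> _\<close> have f': "f' \<in> Acar r" "f' \<notin> P"
    and dg: "\<exists>d::nat. hdeg r (int d) f' \<and> hdeg r (int d + n) a'"
    and v: "\<exists>v\<in>Acar r. v \<notin> P \<and> amul v (amul a f') = amul v (amul a' f)"
    unfolding frac_class_def by auto
  from v obtain v where v: "v \<in> Acar r" "v \<notin> P" "amul v (amul a f') = amul v (amul a' f)" by blast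
  define w where "w = amul u (amul v f)"
  have wA: "w \<in> Acar r" unfolding w_def using u v A by (simp add: amul_Acar)
  have wP: "w \<notin> P" unfolding w_def using u v A nf P
    by (simp add: amul_Acar prime_mul_notin)
  have "amul w (amul a2 f') = amul (amul v f') (amul u (amul a2 f))"
    unfolding w_def by (simp add: amul_ac)
  also have "\<dots> = amul (amul v f') (amul u (amul a f2))" using eq by simp
  also have "\<dots> = amul (amul u f2) (amul v (amul a f'))" by (simp add: amul_ac)
  also have "\<dots> = amul (amul u f2) (amul v (amul a' f))" using v by simp
  also have "\<dots> = amul w (amul a' f2)" unfolding w_def by (simp add: amul_ac)
  finally show "z \<in> frac_class r n P a2 f2"
    unfolding frac_class_def z using f' dg wA wP by blast
qed

lemma class_eq:
  assumes P: "is_prime r P" and A: "a \<in> Acar r" "f \<in> Acar r" "a2 \<in> Acar r" "f2 \<in> Acar r"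
    and nf: "f \<notin> P" "f2 \<notin> P" and u: "u \<in> Acar r" "u \<notin> P"
    and eq: "amul u (amul a f2) = amul u (amul a2 f)"
  shows "frac_class r n P a f = frac_class r n P a2 f2"
  using class_sub[OF P A nf(1) u eq] class_sub[OF P A(3,4,1,2) nf(2) u eq[symmetric]] by blast

lemma class_refl:
  assumes "f \<in> Acar r" "f \<notin> P" "hdeg r (int d) f" "hdeg r (int d + n) a"
  shows "(a, f) \<in> frac_class r n P a f"
  unfolding frac_class_def using assms aone_Acar by blast

lemma class_mem:
  assumes "(a', f') \<in> frac_class r n P a f"
  shows "\<exists>v\<in>Acar r. v \<notin> P \<and> amul v (amul a f') = amul v (amul a' f)"
  using assms unfolding frac_class_def by auto

lemma hdeg_Acar: "hdeg r d a \<Longrightarrow> a \<in> Acar r" unfolding hdeg_def by auto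

lemma hdeg_aone: "hdeg r 0 aone"
  unfolding hdeg_def aone_def using aone_Acar unfolding aone_def by auto

lemma hdeg_aone0: "hdeg r (int 0) aone" using hdeg_aone by simp

lemma prime_aone: "is_prime r P \<Longrightarrow> aone \<notin> P" unfolding is_prime_def by auto

definition PJ :: "nat \<Rightarrow> nat set \<Rightarrow> ('b::{comm_monoid_mult,mult_zero}) melem set" where
  "PJ r J = {a \<in> Acar r. \<not> unitB (fst a) \<or> (\<exists>k. k \<notin> J \<and> snd a k > 0)}"

definition xp :: "nat \<Rightarrow> nat \<Rightarrow> ('b::{comm_monoid_mult,mult_zero}) melem" where
  "xp i k = (1, \<lambda>j. if j = i then k else 0)"

lemma notin_PJ: "a \<in> Acar r \<Longrightarrow> a \<notin> PJ r J \<Longrightarrow> unitB (fst a) \<and> (\<forall>k. k \<notin> J \<longrightarrow> snd a k = 0)"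
  unfolding PJ_def by auto

lemma unitB_mult: "unitB (a * b) \<longleftrightarrow> unitB a \<and> unitB (b::'b::{comm_monoid_mult,mult_zero})"
proof
  assume "unitB (a * b)"
  then obtain c where c: "a * b * c = 1" unfolding unitB_def by blast
  have "a * (b * c) = 1" "b * (a * c) = 1" using c by (simp_all add: ac_simps)
  thus "unitB a \<and> unitB b" unfolding unitB_def by blast
next
  assume "unitB a \<and> unitB b"
  then obtain c d where "a * c = 1" "b * d = 1" unfolding unitB_def by blast
  hence "(a * b) * (c * d) = 1" by (metis mult.assoc mult.left_commute mult_1_right)
  thus "unitB (a * b)" unfolding unitB_def by blast
qed

lemma unitB_one: "unitB 1" unfolding unitB_def by auto

lemma PJ_prime:
  assumes nz: "(0::'b::{comm_monoid_mult,mult_zero}) \<noteq> 1"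
  shows "is_prime r (PJ r J :: 'b melem set)"
proof -
  have z: "azero \<in> (PJ r J :: 'b melem set)" unfolding PJ_def azero_def
    using azero_Acar[of r] nz unfolding azero_def unitB_def by auto
  have id: "\<forall>a\<in>Acar r. \<forall>p\<in>(PJ r J :: 'b melem set). amul a p \<in> PJ r J"
  proof (intro ballI)
    fix a p :: "'b melem" assume a: "a \<in> Acar r" and p: "p \<in> PJ r J"
    show "amul a p \<in> PJ r J"
    proof (cases "fst a * fst p = 0")
      case True thus ?thesis using z by (simp add: amul_def)
    next
      case False
      have "amul a p \<in> Acar r" using a p by (simp add: amul_Acar PJ_def)
      moreover have "amul a p = (fst a * fst p, \<lambda>i. snd a i + snd p i)" using False by (simp add: amul_def)
      ultimately show ?thesis using p unitB_mult unfolding PJ_def by auto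
    qed
  qed
  have one: "aone \<notin> (PJ r J :: 'b melem set)" unfolding PJ_def aone_def using unitB_one by auto
  have pr: "\<forall>a\<in>Acar r. \<forall>b\<in>Acar r. amul a b \<in> (PJ r J :: 'b melem set) \<longrightarrow> a \<in> PJ r J \<or> b \<in> PJ r J"
  proof (intro ballI impI, rule ccontr)
    fix a b :: "'b melem" assume a: "a \<in> Acar r" and b: "b \<in> Acar r" and ab: "amul a b \<in> PJ r J"
      and "\<not> (a \<in> PJ r J \<or> b \<in> PJ r J)"
    hence ua: "unitB (fst a)" "\<forall>k. k \<notin> J \<longrightarrow> snd a k = 0"
      and ub: "unitB (fst b)" "\<forall>k. k \<notin> J \<longrightarrow> snd b k = 0" using notin_PJ a b by blast+
    have u: "unitB (fst a * fst b)" using ua ub unitB_mult by blast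
    hence "fst a * fst b \<noteq> 0" using unit_nz[OF nz] by blast
    hence "amul a b = (fst a * fst b, \<lambda>i. snd a i + snd b i)" by (simp add: amul_def)
    thus False using ab u ua ub unfolding PJ_def by auto
  qed
  show ?thesis unfolding is_prime_def is_ideal_def using z id one pr by (auto simp: PJ_def)
qed

lemma xp_Acar: "(0::'b::{comm_monoid_mult,mult_zero}) \<noteq> 1 \<Longrightarrow> i \<le> r \<Longrightarrow> (xp i k :: 'b melem) \<in> Acar r"
  unfolding xp_def Acar_def by auto

lemma xp_hdeg: "(0::'b::{comm_monoid_mult,mult_zero}) \<noteq> 1 \<Longrightarrow> i \<le> r \<Longrightarrow> hdeg r 1 (xp i 1 :: 'b melem)"
proof -
  assume nz: "(0::'b) \<noteq> 1" and i: "i \<le> r"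
  have "sum (\<lambda>j. if j = i then 1 else 0) {0..r} = (1::nat)" using i by (simp add: sum.delta)
  thus ?thesis unfolding hdeg_def using xp_Acar[OF nz i, of 1] i by (simp add: xp_def)
qed

lemma xp_notin_PJ: "i \<in> J \<Longrightarrow> xp i k \<notin> PJ r J" unfolding PJ_def xp_def using unitB_one by auto

lemma PJ_MProj:
  assumes nz: "(0::'b::{comm_monoid_mult,mult_zero}) \<noteq> 1" and i: "i \<in> J" "i \<le> r"
  shows "(PJ r J :: 'b melem set) \<in> MProj r"
proof -
  have "xp i 1 \<in> (Apos r :: 'b melem set)" unfolding Apos_def using xp_hdeg[OF nz i(2)] by force
  thus ?thesis unfolding MProj_def using PJ_prime[OF nz] xp_notin_PJ[OF i(1)] by blast
qed

lemma xp_Suc: "(0::'b::{comm_monoid_mult,mult_zero}) \<noteq> 1 \<Longrightarrow> (xp i (Suc k) :: 'b melem) = amul (xp i 1) (xp i k)"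
  unfolding xp_def amul_def by (auto simp: fun_eq_iff)

lemma xp_notin:
  assumes nz: "(0::'b::{comm_monoid_mult,mult_zero}) \<noteq> 1" and P: "is_prime r P" and i: "i \<le> r"
    and x: "(xp i 1 :: 'b melem) \<notin> P"
  shows "(xp i k :: 'b melem) \<notin> P"
proof (induction k)
  case 0
  have "(xp i 0 :: 'b melem) = aone" unfolding xp_def aone_def by auto
  thus ?case using prime_aone[OF P] by simp
next
  case (Suc k)
  thus ?case using xp_Suc[OF nz] prime_mul_notin[OF P xp_Acar[OF nz i] xp_Acar[OF nz i] x] by metis
qed

lemma sub_PJ:
  assumes nz: "(0::'b::{comm_monoid_mult,mult_zero}) \<noteq> 1" and P: "is_prime r P" and i: "i \<le> r"
    and x: "(xp i 1 :: 'b melem) \<notin> P"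
  shows "P \<subseteq> PJ r {i}"
proof
  fix q assume q: "q \<in> P"
  have qA: "q \<in> Acar r" using q prime_sub[OF P] by blast
  show "q \<in> PJ r {i}"
  proof (rule ccontr)
    assume "q \<notin> PJ r {i}"
    hence u: "unitB (fst q)" and s: "\<forall>k. k \<noteq> i \<longrightarrow> snd q k = 0" using notin_PJ[OF qA] by auto
    then obtain c where c: "fst q * c = 1" unfolding unitB_def by blast
    have cA: "(c, \<lambda>_. 0) \<in> Acar r" unfolding Acar_def by auto
    have "c * fst q = 1" using c by (simp add: mult.commute)
    hence "amul (c, \<lambda>_. 0) q = xp i (snd q i)" unfolding amul_def xp_def using nz s
      by (auto simp: fun_eq_iff)
    hence "xp i (snd q i) \<in> P" using prime_ideal[OF P cA q] by simp
    thus False using xp_notin[OF nz P i x] by blast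
  qed
qed

lemma open_down: "is_open r V \<Longrightarrow> P \<in> V \<Longrightarrow> Q \<in> MProj r \<Longrightarrow> Q \<subseteq> P \<Longrightarrow> Q \<in> V"
  unfolding is_open_def by blast

lemma cover:
  assumes Q: "Q \<in> MProj r"
  shows "\<exists>i\<le>r. (xp i 1 :: 'b::{comm_monoid_mult,mult_zero} melem) \<notin> Q"
proof (rule ccontr)
  assume all: "\<not> ?thesis"
  have P: "is_prime r Q" using Q unfolding MProj_def by auto
  obtain a where a: "a \<in> Apos r" "a \<notin> Q" using Q unfolding MProj_def by auto
  then obtain d where d: "d \<ge> 1" "hdeg r d a" unfolding Apos_def by auto
  have aA: "a \<in> Acar r" using d hdeg_Acar by blast
  have fz: "fst a \<noteq> 0"
  proof
    assume "fst a = 0" hence "a = azero" using Acar_zero aA by blast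
    thus False using a P unfolding is_prime_def is_ideal_def by auto
  qed
  hence "int (sum (snd a) {0..r}) = d" using d unfolding hdeg_def by auto
  hence "sum (snd a) {0..r} \<noteq> 0" using d(1) by linarith
  hence "\<exists>i\<in>{0..r}. snd a i \<noteq> 0" by (meson sum.neutral)
  then obtain i where i: "i \<le> r" "snd a i > 0" by auto
  define b where "b = (fst a, \<lambda>j. if j = i then snd a j - 1 else snd a j)"
  have bA: "b \<in> Acar r" using aA fz i unfolding b_def Acar_def by auto
  have "amul b (xp i 1) = a" using fz i unfolding b_def amul_def xp_def by (auto simp: fun_eq_iff prod_eq_iff)
  moreover have "xp i 1 \<in> Q" using all i by auto
  ultimately show False using prime_ideal[OF P bA] a by metis
qed

lemma PJ_anti: "J \<subseteq> J' \<Longrightarrow> PJ r J' \<subseteq> PJ r J" unfolding PJ_def by auto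

lemma hdeg_nz: "hdeg r d a \<Longrightarrow> fst a \<noteq> 0 \<Longrightarrow> int (sum (snd a) {0..r}) = d"
  unfolding hdeg_def by auto

lemma unit_elem_deg:
  assumes nz: "(0::'b::{comm_monoid_mult,mult_zero}) \<noteq> 1" and i: "i \<le> r"
    and h: "hdeg r (int d) (f :: 'b melem)" and nf: "f \<notin> PJ r {i}"
  shows "unitB (fst f)" "\<forall>k. k \<noteq> i \<longrightarrow> snd f k = 0" "snd f i = d"
proof -
  have fA: "f \<in> Acar r" using h hdeg_Acar by blast
  show u: "unitB (fst f)" and z: "\<forall>k. k \<noteq> i \<longrightarrow> snd f k = 0" using notin_PJ[OF fA nf] by auto
  have "fst f \<noteq> 0" using unit_nz[OF nz u] .
  hence "int (sum (snd f) {0..r}) = int d" using hdeg_nz[OF h] by simp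
  moreover have "snd f = (\<lambda>k. if k = i then snd f i else 0)" using z by auto
  hence "sum (snd f) {0..r} = snd f i" using i by (metis (no_types, lifting) sum.delta[of "{0..r}" i "\<lambda>_. snd f i"] finite_atLeastAtMost atLeastAtMost_iff le0)
  ultimately show "snd f i = d" by simp
qed

lemma div_lemma:
  assumes nz: "(0::'b::{comm_monoid_mult,mult_zero}) \<noteq> 1" and ij: "i \<noteq> j" "i \<le> r" "j \<le> r"
    and hfi: "hdeg r (int di) (fi :: 'b melem)" and hai: "hdeg r (int di + k) ai" and nfi: "fi \<notin> PJ r {i}"
    and hfj: "hdeg r (int dj) (fj :: 'b melem)" and haj: "hdeg r (int dj + k) aj" and nfj: "fj \<notin> PJ r {j}"
    and eqc: "frac_class r k (PJ r {i,j}) ai fi = frac_class r k (PJ r {i,j}) aj fj"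
  shows "\<exists>a'. hdeg r k a' \<and> ai = amul a' fi"
proof -
  have A: "fi \<in> Acar r" "ai \<in> Acar r" "fj \<in> Acar r" "aj \<in> Acar r"
    using hfi hai hfj haj hdeg_Acar by blast+
  have "fj \<notin> PJ r {i,j}" using nfj PJ_anti[of "{j}" "{i,j}" r] by blast
  hence "(aj, fj) \<in> frac_class r k (PJ r {i,j}) ai fi" using class_refl[OF A(3) _ hfj haj] eqc by simp
  then obtain v where v: "v \<in> Acar r" "v \<notin> PJ r {i,j}" "amul v (amul ai fj) = amul v (amul aj fi)"
    using class_mem by blast
  have eq: "amul ai fj = amul aj fi"
    using cancel[of v, OF _ amul_Acar[OF A(2,3)] amul_Acar[OF A(4,1)] v(3)] notin_PJ[OF v(1,2)] by blast
  note fiP = unit_elem_deg[OF nz ij(2) hfi nfi]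
  note fjP = unit_elem_deg[OF nz ij(3) hfj nfj]
  show ?thesis
  proof (cases "fst ai = 0")
    case True
    hence "ai = azero" using Acar_zero A by blast
    moreover have "hdeg r k azero" unfolding hdeg_def using azero_Acar by (auto simp: azero_def)
    ultimately show ?thesis using amul_zero by metis
  next
    case False
    have n1: "fst ai * fst fj \<noteq> 0" using unit_mult_nz[OF fjP(1) False] .
    hence L: "amul ai fj = (fst ai * fst fj, \<lambda>m. snd ai m + snd fj m)" by (simp add: amul_def)
    have n2: "fst aj * fst fi \<noteq> 0"
    proof
      assume "fst aj * fst fi = 0" hence "amul aj fi = azero" by (simp add: amul_def)
      thus False using eq L n1 by (simp add: azero_def)
    qed
    hence R: "amul aj fi = (fst aj * fst fi, \<lambda>m. snd aj m + snd fi m)" by (simp add: amul_def)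
    have "snd ai i + snd fj i = snd aj i + snd fi i" using eq L R by (metis snd_conv)
    hence ge: "snd ai i \<ge> di" using fiP fjP ij(1) by auto
    obtain c where c: "fst fi * c = 1" using fiP(1) unfolding unitB_def by blast
    define a' where "a' = (fst ai * c, \<lambda>m. if m = i then snd ai m - di else snd ai m)"
    have "fst a' * fst fi = fst ai * (fst fi * c)" unfolding a'_def by (simp add: ac_simps)
    hence fa: "fst a' * fst fi = fst ai" using c by simp
    hence fa0: "fst a' \<noteq> 0" using False by auto
    have prod: "amul a' fi = ai"
      using fa False ge fiP unfolding amul_def a'_def by (auto simp: prod_eq_iff fun_eq_iff)
    have aA: "a' \<in> Acar r" using A(2) fa0 ij(2) unfolding Acar_def a'_def by auto
    have sa: "snd ai = (\<lambda>m. snd a' m + (if m = i then di else 0))"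
      using ge unfolding a'_def by (auto simp: fun_eq_iff)
    have "sum (snd ai) {0..r} = sum (snd a') {0..r} + di"
      unfolding sa sum.distrib using ij(2) by (simp add: sum.delta)
    moreover have "int (sum (snd ai) {0..r}) = int di + k" using hdeg_nz[OF hai False] .
    ultimately have "int (sum (snd a') {0..r}) = k" by simp
    hence "hdeg r k a'" unfolding hdeg_def using aA by simp
    thus ?thesis using prod by metis
  qed
qed

lemma local_sec:
  assumes nz: "(0::'b::{comm_monoid_mult,mult_zero}) \<noteq> 1" and s: "s \<in> Gamma r k" and i: "i \<le> r"
  shows "\<exists>a f d. hdeg r (int d) f \<and> hdeg r (int d + k) (a :: 'b melem) \<and> f \<notin> PJ r {i} \<and>
     (\<forall>Q\<in>MProj r. (xp i 1 :: 'b melem) \<notin> Q \<longrightarrow> f \<notin> Q \<and> s Q = frac_class r k Q a f)"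
proof -
  have PM: "(PJ r {i} :: 'b melem set) \<in> MProj r" using PJ_MProj[OF nz _ i] by simp
  then obtain V a f d where V: "is_open r V" "PJ r {i} \<in> V" "V \<subseteq> MProj r"
    "hdeg r (int d) f" "hdeg r (int d + k) (a :: 'b melem)"
    "\<forall>Q\<in>V. f \<notin> Q \<and> s Q = frac_class r k Q a f"
    using s unfolding Gamma_def sections_def by blast
  have "\<forall>Q\<in>MProj r. (xp i 1 :: 'b melem) \<notin> Q \<longrightarrow> Q \<in> V"
  proof (intro ballI impI)
    fix Q :: "'b melem set" assume Q: "Q \<in> MProj r" "xp i 1 \<notin> Q"
    have "is_prime r Q" using Q unfolding MProj_def by auto
    thus "Q \<in> V" using open_down[OF V(1,2) Q(1)] sub_PJ[OF nz _ i Q(2)] by blast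
  qed
  thus ?thesis using V by blast
qed

lemma agree:
  assumes nz: "(0::'b::{comm_monoid_mult,mult_zero}) \<noteq> 1"
    and ha: "hdeg r k (a :: 'b melem)" and hb: "hdeg r k b"
    and eqc: "frac_class r k (PJ r J) a aone = frac_class r k (PJ r J) b aone"
  shows "a = b"
proof -
  have A: "a \<in> Acar r" "b \<in> Acar r" using ha hb hdeg_Acar by blast+
  have "(b, aone) \<in> frac_class r k (PJ r J) b aone"
    using class_refl[OF aone_Acar prime_aone[OF PJ_prime[OF nz]] hdeg_aone0] hb by simp
  hence "(b, aone) \<in> frac_class r k (PJ r J) a aone" using eqc by simp
  then obtain v where v: "v \<in> Acar r" "v \<notin> PJ r J" "amul v (amul a aone) = amul v (amul b aone)"
    using class_mem by blast
  hence "amul v a = amul v b" using amul_one2 A by metis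
  thus ?thesis using cancel[OF _ A] notin_PJ[OF v(1,2)] by blast
qed

lemma local2:
  assumes nz: "(0::'b::{comm_monoid_mult,mult_zero}) \<noteq> 1" and r: "r \<ge> 1"
    and s: "s \<in> Gamma r k" and i: "i \<le> r"
  shows "\<exists>a'. hdeg r k (a' :: 'b melem) \<and>
     (\<forall>Q\<in>MProj r. (xp i 1 :: 'b melem) \<notin> Q \<longrightarrow> s Q = frac_class r k Q a' aone)"
proof -
  define j where "j = (if i = 0 then 1 else (0::nat))"
  have j: "j \<le> r" "i \<noteq> j" unfolding j_def using r by auto
  obtain ai fi di where I: "hdeg r (int di) fi" "hdeg r (int di + k) (ai :: 'b melem)" "fi \<notin> PJ r {i}"
     "\<forall>Q\<in>MProj r. (xp i 1 :: 'b melem) \<notin> Q \<longrightarrow> fi \<notin> Q \<and> s Q = frac_class r k Q ai fi"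
    using local_sec[OF nz s i] by blast
  obtain aj fj dj where J: "hdeg r (int dj) fj" "hdeg r (int dj + k) (aj :: 'b melem)" "fj \<notin> PJ r {j}"
     "\<forall>Q\<in>MProj r. (xp j 1 :: 'b melem) \<notin> Q \<longrightarrow> fj \<notin> Q \<and> s Q = frac_class r k Q aj fj"
    using local_sec[OF nz s j(1)] by blast
  have PM: "(PJ r {i,j} :: 'b melem set) \<in> MProj r" using PJ_MProj[OF nz _ i] by simp
  have "s (PJ r {i,j}) = frac_class r k (PJ r {i,j}) ai fi" using I(4) PM xp_notin_PJ[of i "{i,j}"] by blast
  moreover have "s (PJ r {i,j}) = frac_class r k (PJ r {i,j}) aj fj" using J(4) PM xp_notin_PJ[of j "{i,j}"] by blast
  ultimately obtain a' where a': "hdeg r k a'" "ai = amul a' fi"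
    using div_lemma[OF nz j(2) i j(1) I(1-3) J(1-3)] by metis
  have A: "ai \<in> Acar r" "fi \<in> Acar r" "a' \<in> Acar r" using I a' hdeg_Acar by blast+
  have "\<forall>Q\<in>MProj r. (xp i 1 :: 'b melem) \<notin> Q \<longrightarrow> s Q = frac_class r k Q a' aone"
  proof (intro ballI impI)
    fix Q :: "'b melem set" assume Q: "Q \<in> MProj r" "xp i 1 \<notin> Q"
    have P: "is_prime r Q" using Q unfolding MProj_def by auto
    have e1: "amul aone (amul ai aone) = ai" using A(1) by (simp add: amul_one amul_one2)
    have e: "amul aone (amul ai aone) = amul aone (amul a' fi)" unfolding e1
      using A(1) a'(2) by (simp add: amul_one)
    have "s Q = frac_class r k Q ai fi" using I(4) Q by blast
    also have "\<dots> = frac_class r k Q a' aone"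
      using class_eq[OF P A(1,2,3) aone_Acar _ prime_aone[OF P] aone_Acar prime_aone[OF P] e] I(4) Q by blast
    finally show "s Q = frac_class r k Q a' aone" .
  qed
  thus ?thesis using a' by blast
qed

lemma gmap_Gamma: "hdeg r k (a :: 'b::{comm_monoid_mult,mult_zero} melem) \<Longrightarrow> gmap r k a \<in> Gamma r k"
proof -
  assume h: "hdeg r k a"
  have op: "is_open r (MProj r)" unfolding is_open_def
    by (rule exI[of _ "{aone}"]) (auto simp: aone_Acar MProj_def prime_aone)
  have h0: "hdeg r (int 0 + k) a" using h by simp
  show ?thesis unfolding Gamma_def sections_def
  proof (intro CollectI conjI allI impI ballI)
    fix P :: "'b melem set" assume "P \<notin> MProj r" thus "gmap r k a P = {}" unfolding gmap_def by simp
  next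
    fix P :: "'b melem set" assume P: "P \<in> MProj r"
    have "\<forall>Q\<in>MProj r. aone \<notin> Q \<and> gmap r k a Q = frac_class r k Q a aone"
      unfolding gmap_def MProj_def using prime_aone by auto
    thus "\<exists>V a' f d. is_open r V \<and> P \<in> V \<and> V \<subseteq> MProj r \<and> hdeg r (int d) f \<and>
        hdeg r (int d + k) a' \<and> (\<forall>Q\<in>V. f \<notin> Q \<and> gmap r k a Q = frac_class r k Q a' f)"
      using op P hdeg_aone0 h0 by blast
  qed
qed

lemma main_bij:
  assumes r: "r \<ge> 1"
  shows "bij_betw (gmap r k) {a :: 'b::{comm_monoid_mult,mult_zero} melem. hdeg r k a} (Gamma r k)"
proof (cases "(0::'b) = 1")
  case True
  have all0: "\<And>b::'b. b = 0"
  proof -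
    fix b :: 'b
    have "b = b * 1" by simp
    also have "\<dots> = b * 0" using True by simp
    also have "\<dots> = 0" by (rule mult_zero_right)
    finally show "b = 0" .
  qed
  have Acar1: "Acar r = {azero :: 'b melem}"
  proof (intro equalityI subsetI)
    fix x :: "'b melem" assume "x \<in> Acar r"
    thus "x \<in> {azero}" using Acar_zero[of x r] all0[of "fst x"] by simp
  qed (simp add: azero_Acar)
  have noP: "MProj r = ({} :: 'b melem set set)"
  proof -
    have e: "aone = (azero :: 'b melem)" unfolding aone_def azero_def using True by simp
    have "P \<notin> MProj r" for P :: "'b melem set"
    proof
      assume "P \<in> MProj r"
      hence "is_prime r P" unfolding MProj_def by simp
      hence "aone \<notin> P" "azero \<in> P" unfolding is_prime_def is_ideal_def by blast+
      thus False using e by simp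
    qed
    thus ?thesis by blast
  qed
  have H: "{a :: 'b melem. hdeg r k a} = {azero}"
  proof (intro equalityI subsetI)
    fix x :: "'b melem" assume "x \<in> {a. hdeg r k a}"
    hence "x \<in> Acar r" using hdeg_Acar by blast
    thus "x \<in> {azero}" using Acar1 by simp
  next
    fix x :: "'b melem" assume "x \<in> {azero}"
    thus "x \<in> {a. hdeg r k a}" unfolding hdeg_def using azero_Acar by (simp add: azero_def)
  qed
  have g0: "gmap r k (azero :: 'b melem) = (\<lambda>_. {})" unfolding gmap_def noP by simp
  have G: "Gamma r k = {(\<lambda>_. {}) :: 'b melem set \<Rightarrow> _}"
  proof (intro equalityI subsetI)
    fix s :: "'b melem set \<Rightarrow> ('b melem \<times> 'b melem) set" assume "s \<in> Gamma r k"
    hence "\<forall>P. P \<notin> MProj r \<longrightarrow> s P = {}" unfolding Gamma_def sections_def by simp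
    hence "s = (\<lambda>_. {})" unfolding noP by (simp add: fun_eq_iff)
    thus "s \<in> {\<lambda>_. {}}" by simp
  next
    fix s :: "'b melem set \<Rightarrow> ('b melem \<times> 'b melem) set" assume "s \<in> {\<lambda>_. {}}"
    hence s: "s = gmap r k azero" using g0 by simp
    have "azero \<in> {a :: 'b melem. hdeg r k a}" using H by simp
    hence "hdeg r k (azero :: 'b melem)" by simp
    thus "s \<in> Gamma r k" unfolding s by (rule gmap_Gamma)
  qed
  have "gmap r k (azero :: 'b melem) = (\<lambda>_. {})" unfolding gmap_def noP by simp
  thus ?thesis unfolding H G bij_betw_def by simp
next
  case False
  note nz = False
  have inj: "inj_on (gmap r k) {a :: 'b melem. hdeg r k a}"
  proof (rule inj_onI)
    fix a b :: "'b melem" assume a: "a \<in> {a. hdeg r k a}" and b: "b \<in> {a. hdeg r k a}"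
      and e: "gmap r k a = gmap r k b"
    have PM: "(PJ r {0} :: 'b melem set) \<in> MProj r" using PJ_MProj[OF nz, of 0 "{0}" r] by simp
    have "frac_class r k (PJ r {0}) a aone = frac_class r k (PJ r {0}) b aone"
      using fun_cong[OF e, of "PJ r {0}"] PM unfolding gmap_def by simp
    thus "a = b" using agree[OF nz] a b by blast
  qed
  have sur: "Gamma r k \<subseteq> gmap r k ` {a :: 'b melem. hdeg r k a}"
  proof
    fix s :: "'b melem set \<Rightarrow> ('b melem \<times> 'b melem) set" assume s: "s \<in> Gamma r k"
    have "\<forall>i\<in>{0..r}. \<exists>a'. hdeg r k (a' :: 'b melem) \<and>
     (\<forall>Q\<in>MProj r. (xp i 1 :: 'b melem) \<notin> Q \<longrightarrow> s Q = frac_class r k Q a' aone)"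
      using local2[OF nz r s] by simp
    hence "\<exists>A. \<forall>i\<in>{0..r}. hdeg r k (A i :: 'b melem) \<and>
     (\<forall>Q\<in>MProj r. (xp i 1 :: 'b melem) \<notin> Q \<longrightarrow> s Q = frac_class r k Q (A i) aone)"
      by (rule bchoice)
    then obtain A where A: "\<forall>i\<in>{0..r}. hdeg r k (A i :: 'b melem) \<and>
     (\<forall>Q\<in>MProj r. (xp i 1 :: 'b melem) \<notin> Q \<longrightarrow> s Q = frac_class r k Q (A i) aone)" ..
    have Ah: "hdeg r k (A i)" if "i \<le> r" for i using A that by simp
    have As: "s Q = frac_class r k Q (A i) aone" if "i \<le> r" "Q \<in> MProj r" "(xp i 1 :: 'b melem) \<notin> Q" for i Q
      using A that by simp
    have same: "A i = A 0" if i: "i \<le> r" for i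
    proof (cases "i = 0")
      case True thus ?thesis by simp
    next
      case False
      have PM: "(PJ r {0,i} :: 'b melem set) \<in> MProj r" using PJ_MProj[OF nz, of 0 "{0,i}" r] by simp
      have "s (PJ r {0,i}) = frac_class r k (PJ r {0,i}) (A 0) aone"
        using As[OF _ PM xp_notin_PJ[of 0 "{0,i}"]] by simp
      moreover have "s (PJ r {0,i}) = frac_class r k (PJ r {0,i}) (A i) aone"
        using As[OF i PM xp_notin_PJ[of i "{0,i}"]] by simp
      ultimately have "frac_class r k (PJ r {0,i}) (A 0) aone = frac_class r k (PJ r {0,i}) (A i) aone" by simp
      moreover have "hdeg r k (A 0)" "hdeg r k (A i)" using Ah i by auto
      ultimately show ?thesis using agree[OF nz] by blast
    qed
    have "s = gmap r k (A 0)"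
    proof
      fix P show "s P = gmap r k (A 0) P"
      proof (cases "P \<in> MProj r")
        case False
        have "s P = {}" using s False unfolding Gamma_def sections_def by blast
        thus ?thesis using False unfolding gmap_def by simp
      next
        case True
        then obtain i where i: "i \<le> r" "(xp i 1 :: 'b melem) \<notin> P" using cover by blast
        hence "s P = frac_class r k P (A i) aone" using As True by blast
        thus ?thesis using same[OF i(1)] True unfolding gmap_def by simp
      qed
    qed
    moreover have "hdeg r k (A 0)" using Ah by simp
    ultimately show "s \<in> gmap r k ` {a. hdeg r k a}" by blast
  qed
  show ?thesis unfolding bij_betw_def using inj sur gmap_Gamma by blast
qed

lemma main_act:
  assumes ha: "hdeg r (int i) a" and hb: "hdeg r k b"
  shows "sact r (k + int i) a (gmap r k b) = gmap r (k + int i) (amul a b)"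
proof
  fix P
  show "sact r (k + int i) a (gmap r k b) P = gmap r (k + int i) (amul a b) P"
  proof (cases "P \<in> MProj r")
    case False thus ?thesis unfolding sact_def gmap_def by simp
  next
    case True
    have Pp: "is_prime r P" using True unfolding MProj_def by auto
    have aA: "a \<in> Acar r" and bA: "b \<in> Acar r" using ha hb hdeg_Acar by blast+
    define S where "S = frac_class r k P b aone"
    define C where "C = frac_class r (k + int i) P (amul a b) aone"
    have mem: "(b, aone) \<in> S" unfolding S_def
      using class_refl[OF aone_Acar prime_aone[OF Pp] hdeg_aone0, where n=k and a=b] hb by simp
    have each: "frac_class r (k + int i) P (amul a x) t = C" if xt: "(x, t) \<in> S" for x t
    proof -
      from xt have t: "t \<in> Acar r" "t \<notin> P" and xd: "\<exists>d::nat. hdeg r (int d) t \<and> hdeg r (int d + k) x"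
        unfolding S_def frac_class_def by auto
      have xA: "x \<in> Acar r" using xd hdeg_Acar by blast
      obtain w where w: "w \<in> Acar r" "w \<notin> P" "amul w (amul b t) = amul w (amul x aone)"
        using class_mem xt unfolding S_def by blast
      have "amul w (amul (amul a x) aone) = amul a (amul w (amul x aone))" by (simp add: amul_ac)
      also have "\<dots> = amul a (amul w (amul b t))" using w by simp
      also have "\<dots> = amul w (amul (amul a b) t)" by (simp add: amul_ac)
      finally have e: "amul w (amul (amul a x) aone) = amul w (amul (amul a b) t)" .
      show ?thesis unfolding C_def
        using class_eq[OF Pp amul_Acar[OF aA xA] t(1) amul_Acar[OF aA bA] aone_Acar t(2) prime_aone[OF Pp] w(1,2) e] .
    qed
    have "{frac_class r (k + int i) P (amul a x) t | x t. (x, t) \<in> S} = {C}"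
      using mem each by blast
    thus ?thesis using True unfolding sact_def gmap_def S_def[symmetric] C_def[symmetric] by simp
  qed
qed

theorem mainTheorem7:
  fixes r :: nat and n :: int
    and B_witness :: "'b::{comm_monoid_mult,mult_zero} itself"
  assumes "r \<ge> 1"
  shows "(\<forall>m::int.
            bij_betw (gmap r (n + m)) {a :: 'b melem. hdeg r (n + m) a} (Gamma r (n + m)))
       \<and> (\<forall>m::int. \<forall>i::nat. \<forall>a b :: 'b melem. hdeg r (int i) a \<longrightarrow> hdeg r (n + m) b \<longrightarrow>
            sact r (n + m + int i) a (gmap r (n + m) b) = gmap r (n + m + int i) (amul a b))"
  using main_bij[OF assms] main_act by blast

end
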